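(* Fix integers $s\geqslant 3$ and $n\geqslant 1$ and let $h_{n,s}=(1,n,n,\dots,n)$ with $s$ entries equal to $n$. Then \[ \alpha_{h_{n,s}}=\sum_{k=0}^{n}\binom{n}{k}k^{\,n-k} \] (with $0^0=1$); in particular it does not depend on $s$. Consequently, setting $\alpha_{h_{0,s}}=1$, \[ \mathrm{Bor}\Big(\sum_{n\geqslant 0}\alpha_{h_{n,s}}t^n\Big)=e^{te^t}. \]
   Context: Let $\mathbb N=\mathbb Z_{\geqslant 0}$ with the componentwise order. A partition in $\mathbb N^n$ is a finite subset $\lambda\subset\mathbb N^n$ closed downward. The degree of a point is the sum of its coordinates; $\lambda_{=i}$, $\lambda_{\geqslant i}$ are the elements of degree $i$, resp. $\geqslant i$; the Hilbert–Samuel function $h_\lambda(i)=|\lambda_{=i}|$ is written as the tuple $(h_\lambda(0),h_\lambda(1),\dots,h_\lambda(\ell))$, $\ell$ the maximal degree. $\mathrm{Soc}(\lambda)$ is the set of maximal elements. For a tuple $h=(1,h_1,\dots,h_\ell)$, $\alpha_h$ is the number of partitions $\lambda\subset\mathbb N^{h_1}$ with $h_\lambda=h$ and $\mathrm{Soc}(\lambda)\subset\lambda_{\geqslant 3}$. $\mathrm{Bor}\colon\mathbb Q[[t]]\to\mathbb Q[[t]]$ sends $\sum f_kt^k\mapsto\sum\frac{f_k}{k!}t^k$. *)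

theory Defs
  imports "HOL-Computational_Algebra.Formal_Power_Series"
begin

text \<open>Points of N^n are modelled as functions nat => nat vanishing at all indices >= n;
  the componentwise order is the pointwise order on functions.\<close>

definition in_Nn :: "nat \<Rightarrow> (nat \<Rightarrow> nat) \<Rightarrow> bool" where
  "in_Nn n x \<longleftrightarrow> (\<forall>i\<ge>n. x i = 0)"

definition deg :: "nat \<Rightarrow> (nat \<Rightarrow> nat) \<Rightarrow> nat" where
  "deg n x = (\<Sum>i<n. x i)"

definition is_partition :: "nat \<Rightarrow> (nat \<Rightarrow> nat) set \<Rightarrow> bool" where
  "is_partition n L \<longleftrightarrow> finite L \<and> (\<forall>x\<in>L. in_Nn n x) \<and>
     (\<forall>x\<in>L. \<forall>y. in_Nn n y \<and> y \<le> x \<longrightarrow> y \<in> L)"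

definition hilb :: "nat \<Rightarrow> (nat \<Rightarrow> nat) set \<Rightarrow> nat \<Rightarrow> nat" where
  "hilb n L i = card {x\<in>L. deg n x = i}"

definition hilb_tuple :: "nat \<Rightarrow> (nat \<Rightarrow> nat) set \<Rightarrow> nat list" where
  "hilb_tuple n L = (if L = {} then [] else map (hilb n L) [0..<Suc (Max (deg n ` L))])"

definition Soc :: "(nat \<Rightarrow> nat) set \<Rightarrow> (nat \<Rightarrow> nat) set" where
  "Soc L = {x\<in>L. \<forall>y\<in>L. x \<le> y \<longrightarrow> y = x}"

definition geq_part :: "nat \<Rightarrow> (nat \<Rightarrow> nat) set \<Rightarrow> nat \<Rightarrow> (nat \<Rightarrow> nat) set" where
  "geq_part n L i = {x\<in>L. deg n x \<ge> i}"

definition alpha :: "nat list \<Rightarrow> nat" where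
  "alpha h = card {L. is_partition (h ! 1) L \<and> hilb_tuple (h ! 1) L = h \<and>
                       Soc L \<subseteq> geq_part (h ! 1) L 3}"

definition hns :: "nat \<Rightarrow> nat \<Rightarrow> nat list" where
  "hns n s = 1 # replicate s n"

definition Bor :: "real fps \<Rightarrow> real fps" where
  "Bor f = Abs_fps (\<lambda>k. fps_nth f k / fact k)"

end

theory Submission
  imports Defs "HOL-Library.FuncSet"
begin



definition Idem :: "nat \<Rightarrow> (nat \<Rightarrow> nat) set" where
  "Idem n = {f \<in> {..<n} \<rightarrow>\<^sub>E {..<n}. \<forall>j<n. f (f j) = f j}"

lemma idem_bij:
  "bij_betw (\<lambda>f. (f ` {..<n}, restrict f ({..<n} - f ` {..<n}))) (Idem n)
     (SIGMA K:Pow {..<n}. ({..<n} - K) \<rightarrow>\<^sub>E K)"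
proof (rule bij_betw_byWitness[where f' = "\<lambda>(K,g). (\<lambda>j. if j \<in> K then j else g j)"])
  show "\<forall>f\<in>Idem n. (case (f ` {..<n}, restrict f ({..<n} - f ` {..<n})) of
          (K, g) \<Rightarrow> \<lambda>j. if j \<in> K then j else g j) = f"
  proof
    fix f assume f: "f \<in> Idem n"
    show "(case (f ` {..<n}, restrict f ({..<n} - f ` {..<n})) of
          (K, g) \<Rightarrow> \<lambda>j. if j \<in> K then j else g j) = f"
    proof (rule ext)
      fix j
      show "(case (f ` {..<n}, restrict f ({..<n} - f ` {..<n})) of
          (K, g) \<Rightarrow> \<lambda>j. if j \<in> K then j else g j) j = f j"
        using f unfolding Idem_def by (auto simp: PiE_def extensional_def)
    qed
  qed
  show "\<forall>a'\<in>SIGMA K:Pow {..<n}. {..<n} - K \<rightarrow>\<^sub>E K.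
       (\<lambda>f. (f ` {..<n}, restrict f ({..<n} - f ` {..<n})))
        (case a' of (K, g) \<Rightarrow> \<lambda>j. if j \<in> K then j else g j) = a'"
  proof (intro ballI)
    fix a' assume a': "a' \<in> (SIGMA K:Pow {..<n}. {..<n} - K \<rightarrow>\<^sub>E K)"
    obtain K g where kg: "a' = (K, g)" "K \<subseteq> {..<n}" "g \<in> ({..<n} - K) \<rightarrow>\<^sub>E K"
      using a' by auto
    let ?f = "\<lambda>j. if j \<in> K then j else g j"
    have im: "?f ` {..<n} = K"
    proof
      show "?f ` {..<n} \<subseteq> K" using kg by auto
      show "K \<subseteq> ?f ` {..<n}"
      proof
        fix k assume "k \<in> K" then show "k \<in> ?f ` {..<n}"
          using kg by (intro image_eqI[of _ _ k]) auto
      qed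
    qed
    have "restrict ?f ({..<n} - K) = g"
      using kg by (auto simp: restrict_def PiE_def extensional_def fun_eq_iff)
    then show "(\<lambda>f. (f ` {..<n}, restrict f ({..<n} - f ` {..<n})))
        (case a' of (K, g) \<Rightarrow> \<lambda>j. if j \<in> K then j else g j) = a'"
      using im kg by simp
  qed
  show "(\<lambda>f. (f ` {..<n}, restrict f ({..<n} - f ` {..<n}))) ` Idem n
        \<subseteq> (SIGMA K:Pow {..<n}. {..<n} - K \<rightarrow>\<^sub>E K)"
    unfolding Idem_def by (auto simp: PiE_def Pi_def)
  show "(\<lambda>(K, g). \<lambda>j. if j \<in> K then j else g j) ` (SIGMA K:Pow {..<n}. {..<n} - K \<rightarrow>\<^sub>E K)
        \<subseteq> Idem n"
    unfolding Idem_def by (auto simp: PiE_def Pi_def extensional_def subset_iff)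
qed

lemma card_Idem: "card (Idem n) = (\<Sum>k\<le>n. (n choose k) * k ^ (n - k))"
proof -
  have "card (Idem n) = card (SIGMA K:Pow {..<n}. ({..<n} - K) \<rightarrow>\<^sub>E K)"
    using idem_bij bij_betw_same_card by blast
  also have "\<dots> = (\<Sum>K\<in>Pow {..<n}. card K ^ (n - card K))"
  proof (subst card_SigmaI)
    show "(\<Sum>K\<in>Pow {..<n}. card ({..<n} - K \<rightarrow>\<^sub>E K)) = (\<Sum>K\<in>Pow {..<n}. card K ^ (n - card K))"
    proof (rule sum.cong[OF refl])
      fix K assume "K \<in> Pow {..<n}"
      then have "K \<subseteq> {..<n}" by auto
      moreover have "finite K" using calculation finite_subset by blast
      ultimately show "card ({..<n} - K \<rightarrow>\<^sub>E K) = card K ^ (n - card K)"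
        by (simp add: card_PiE card_Diff_subset)
    qed
  qed (auto intro!: finite_PiE intro: finite_subset)
  also have "\<dots> = (\<Sum>k\<le>n. of_nat (card {K \<in> Pow {..<n}. card K = k}) * (k ^ (n - k)))"
    by (rule sum_fun_comp[where f = "\<lambda>k. k ^ (n - k)"])
       (auto dest: card_mono[of "{..<n}", OF finite_lessThan])
  also have "\<dots> = (\<Sum>k\<le>n. (n choose k) * k ^ (n - k))"
  proof (rule sum.cong[OF refl])
    fix k
    have "{K \<in> Pow {..<n}. card K = k} = {B. B \<subseteq> {..<n} \<and> card B = k}" by auto
    then show "of_nat (card {K \<in> Pow {..<n}. card K = k}) * k ^ (n - k) = (n choose k) * k ^ (n - k)"
      using n_subsets[of "{..<n}" k] by simp
  qed
  finally show ?thesis .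
qed



definition Q :: "(nat \<Rightarrow> nat) \<Rightarrow> nat \<Rightarrow> nat \<Rightarrow> nat multiset" where
  "Q f j e = add_mset j (replicate_mset e (f j))"

lemma count_Q: "count (Q f j e) x = (if x = j then 1 else 0) + (if x = f j then e else 0)"
  by (simp add: Q_def)

lemma set_Q: "set_mset (Q f j e) \<subseteq> {j, f j}"
  by (auto simp: Q_def split: if_splits)

lemma size_Q[simp]: "size (Q f j e) = Suc e"
  by (simp add: Q_def)

lemma step:
  assumes idem: "\<And>j. j < n \<Longrightarrow> f j < n \<and> f (f j) = f j"
    and e: "e \<ge> 1" and ne: "M \<noteq> {#}"
    and low: "\<And>i. i \<in># M \<Longrightarrow> \<exists>j<n. M - {#i#} = Q f j e"
  shows "\<exists>k<n. M = Q f k (Suc e)"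
proof -
  obtain i where i: "i \<in># M" using ne by blast
  obtain j where j: "j < n" "M - {#i#} = Q f j e" using low[OF i] by blast
  define c where "c = f j"
  have Mi: "M = add_mset i (Q f j e)" using i j by (metis insert_DiffM)
  have cM: "c \<in># M" using e unfolding Mi Q_def c_def by (simp add: Q_def)
  obtain k where k: "k < n" "M - {#c#} = Q f k e" using low[OF cM] by blast
  have Mc: "M = add_mset c (Q f k e)" using cM k by (metis insert_DiffM)
  show ?thesis
  proof (cases "f k = c")
    case True
    then have "M = Q f k (Suc e)" unfolding Mc by (simp add: Q_def)
    then show ?thesis using k by blast
  next
    case False
    have fc: "f c = c" using idem[OF j(1)] c_def by simp
    show ?thesis
    proof (cases "c \<in># Q f k e")
      case True
      then have "c = k" using set_Q[of f k e] False by auto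
      then show ?thesis using fc False by simp
    next
      case False
      then have c1: "count M c = 1" unfolding Mc by (simp add: count_eq_zero_iff)
      have "count M c = (if c = i then 1 else 0) + (if c = j then 1 else 0) + e"
        unfolding Mi by (simp add: count_Q c_def)
      then have e1: "e = 1" and ci: "c \<noteq> i" and cj: "c \<noteq> j" using c1 e by (auto split: if_splits)
      have "Q f k e = {#i, j#}"
      proof -
        have "M = {#c, i, j#}" unfolding Mi using e1 by (simp add: Q_def c_def)
        then show ?thesis using Mc by (metis add_mset_commute add_mset_remove_trivial)
      qed
      then have "{#k, f k#} = {#i, j#}" using e1 by (simp add: Q_def)
      then have "(k = i \<and> f k = j) \<or> (k = j \<and> f k = i)" by (auto simp: add_eq_conv_diff)
      then show ?thesis
      proof
        assume "k = i \<and> f k = j"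
        then have "f j = j" using idem[OF k(1)] by auto
        then show ?thesis using cj c_def by simp
      next
        assume "k = j \<and> f k = i"
        then show ?thesis using ci c_def by auto
      qed
    qed
  qed
qed



lemma pair_eq: "{#a,b#} = {#c,d::nat#} \<longleftrightarrow> (a=c \<and> b=d) \<or> (a=d \<and> b=c)"
  by (auto simp: add_eq_conv_diff)

lemma size2: "size M = 2 \<Longrightarrow> \<exists>a b. M = {#a,b#}"
proof -
  assume "size M = 2"
  then have "size M = Suc (Suc 0)" by simp
  then obtain a N where "M = add_mset a N" "size N = Suc 0"
    by (metis size_add_mset size_eq_Suc_imp_eq_union Suc_inject)
  then obtain b N' where "N = add_mset b N'" "size N' = 0"
    by (metis size_add_mset size_eq_Suc_imp_eq_union Suc_inject)
  then show ?thesis using \<open>M = add_mset a N\<close> by auto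
qed

lemma size3: "size M = 3 \<Longrightarrow> \<exists>a b c. M = {#a,b,c#}"
proof -
  assume "size M = 3"
  then have "size M = Suc 2" by simp
  then obtain a N where "M = add_mset a N" "size N = 2"
    by (metis size_add_mset size_eq_Suc_imp_eq_union Suc_inject)
  then show ?thesis using size2 by blast
qed

lemma graph_lemma:
  fixes MS :: "nat multiset set"
  assumes fin: "finite MS"
  and C1: "\<And>M. M \<in> MS \<Longrightarrow> set_mset M \<subseteq> {..<n}"
  and C2: "\<And>M N. M \<in> MS \<Longrightarrow> N \<subseteq># M \<Longrightarrow> N \<in> MS"
  and c2: "card {M\<in>MS. size M = 2} = n"
  and c3: "card {M\<in>MS. size M = 3} = n"
  and s1: "\<And>j. j < n \<Longrightarrow> \<exists>i. {#j,i#} \<in> MS"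
  and s2: "\<And>M. M \<in> MS \<Longrightarrow> size M = 2 \<Longrightarrow> \<exists>i. add_mset i M \<in> MS"
  shows "\<exists>f. (\<forall>j<n. f j < n \<and> f (f j) = f j) \<and> {M\<in>MS. size M = 2} = (\<lambda>j. {#j, f j#}) ` {..<n}"
proof -
  define loop where "loop k \<longleftrightarrow> {#k,k#} \<in> MS" for k
  define adj where "adj a b \<longleftrightarrow> a \<noteq> b \<and> {#a,b#} \<in> MS" for a b
  have adj_sym: "adj a b \<Longrightarrow> adj b a" for a b
    unfolding adj_def by (simp add: add_mset_commute)
  have loop_lt: "loop k \<Longrightarrow> k < n" for k
    unfolding loop_def using C1 by fastforce
  have adj_lt: "adj a b \<Longrightarrow> a < n \<and> b < n" for a b
    unfolding adj_def using C1 by fastforce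
  define D2 where "D2 = {M\<in>MS. size M = 2}"
  define D3 where "D3 = {M\<in>MS. size M = 3}"
  define Lp where "Lp = {k. loop k}"
  define U1 where "U1 = {u. u < n \<and> \<not> loop u \<and> (\<exists>a. loop a \<and> adj a u)}"
  define W where "W = {w. w < n \<and> \<not> loop w \<and> \<not> (\<exists>a. loop a \<and> adj a w)}"
  define LD where "LD = (\<lambda>k. {#k,k#}) ` Lp"
  define EL where "EL = {M. \<exists>a b. adj a b \<and> loop a \<and> loop b \<and> M = {#a,b#}}"
  define E1 where "E1 = {M. \<exists>a u. adj a u \<and> loop a \<and> \<not> loop u \<and> M = {#a,u#}}"
  define EF where "EF = {M. \<exists>u v. adj u v \<and> \<not> loop u \<and> \<not> loop v \<and> M = {#u,v#}}"
  have finD2: "finite D2" unfolding D2_def using fin by simp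
  have finD3: "finite D3" unfolding D3_def using fin by simp
  have finLp: "finite Lp" unfolding Lp_def using loop_lt
    by (metis finite_lessThan lessThan_iff mem_Collect_eq rev_finite_subset subsetI)
  have LD2: "LD \<subseteq> D2" unfolding LD_def D2_def Lp_def loop_def by auto
  have EL2: "EL \<subseteq> D2" unfolding EL_def D2_def adj_def by auto
  have E12: "E1 \<subseteq> D2" unfolding E1_def D2_def adj_def by auto
  have EF2: "EF \<subseteq> D2" unfolding EF_def D2_def adj_def by auto
  have finLD: "finite LD" using LD2 finD2 finite_subset by blast
  have finEL: "finite EL" using EL2 finD2 finite_subset by blast
  have finE1: "finite E1" using E12 finD2 finite_subset by blast
  have finEF: "finite EF" using EF2 finD2 finite_subset by blast
  have D2eq: "D2 = LD \<union> EL \<union> E1 \<union> EF"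
  proof
    show "LD \<union> EL \<union> E1 \<union> EF \<subseteq> D2" using LD2 EL2 E12 EF2 by blast
    show "D2 \<subseteq> LD \<union> EL \<union> E1 \<union> EF"
    proof
      fix M assume M: "M \<in> D2"
      then obtain a b where ab: "M = {#a,b#}" using size2 unfolding D2_def by blast
      have Mm: "M \<in> MS" using M unfolding D2_def by simp
      show "M \<in> LD \<union> EL \<union> E1 \<union> EF"
      proof (cases "a = b")
        case True
        then show ?thesis using Mm ab unfolding LD_def Lp_def loop_def by auto
      next
        case False
        then have "adj a b" using Mm ab unfolding adj_def by simp
        have ba: "adj b a" using adj_sym[OF \<open>adj a b\<close>] .
        have "{#a,b#} = {#b,a#}" by (simp add: add_mset_commute)
        then show ?thesis using ab \<open>adj a b\<close> ba unfolding EL_def E1_def EF_def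
          by (cases "loop a"; cases "loop b") blast+
      qed
    qed
  qed
  have ELl: "\<forall>x\<in>#M. loop x" if "M \<in> EL" for M using that unfolding EL_def by auto
  have E1l: "(\<exists>x\<in>#M. loop x) \<and> (\<exists>x\<in>#M. \<not> loop x)" if "M \<in> E1" for M
    using that unfolding E1_def by auto
  have EFl: "\<forall>x\<in>#M. \<not> loop x" if "M \<in> EF" for M using that unfolding EF_def by auto
  have ne2: "\<exists>a b. a \<noteq> b \<and> M = {#a,b#}" if "M \<in> EL \<union> E1 \<union> EF" for M
    using that unfolding EL_def E1_def EF_def adj_def by blast
  have dLD: "LD \<inter> (EL \<union> E1 \<union> EF) = {}"
  proof -
    have "M \<notin> LD" if hM: "M \<in> EL \<union> E1 \<union> EF" for M
    proof
      assume "M \<in> LD"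
      then obtain k where "M = {#k,k#}" unfolding LD_def by blast
      moreover obtain a b where "a \<noteq> b" "M = {#a,b#}" using ne2[OF hM] by blast
      ultimately show False by (simp add: pair_eq)
    qed
    then show ?thesis by blast
  qed
  have dEL: "EL \<inter> (E1 \<union> EF) = {}"
  proof -
    have "M \<notin> EL" if hM: "M \<in> E1 \<union> EF" for M
    proof
      assume h: "M \<in> EL"
      then obtain a b where ab: "M = {#a,b#}" unfolding EL_def by blast
      then have "a \<in># M" by simp
      then show False using ELl[OF h] hM E1l EFl by blast
    qed
    then show ?thesis by blast
  qed
  have dE1: "E1 \<inter> EF = {}"
  proof -
    have "M \<notin> EF" if hM: "M \<in> E1" for M
      using E1l[OF hM] EFl by blast
    then show ?thesis by blast
  qed
  have cardD2: "card D2 = card Lp + card EL + card E1 + card EF"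
  proof -
    have "card D2 = card LD + card (EL \<union> E1 \<union> EF)"
      unfolding D2eq using dLD finLD finEL finE1 finEF
      by (metis card_Un_disjoint finite_UnI sup_assoc)
    also have "card (EL \<union> E1 \<union> EF) = card EL + card (E1 \<union> EF)"
      using dEL finEL finE1 finEF by (metis card_Un_disjoint finite_UnI sup_assoc)
    also have "card (E1 \<union> EF) = card E1 + card EF"
      using dE1 finE1 finEF by (metis card_Un_disjoint)
    also have "card LD = card Lp"
      unfolding LD_def by (rule card_image) (auto simp: inj_on_def pair_eq)
    finally show ?thesis by simp
  qed
  have cardV: "card Lp + card U1 + card W = n"
  proof -
    have "{..<n} = Lp \<union> U1 \<union> W" unfolding Lp_def U1_def W_def using loop_lt by auto
    moreover have "Lp \<inter> U1 = {}" "(Lp \<union> U1) \<inter> W = {}"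
      unfolding Lp_def U1_def W_def by auto
    moreover have "finite U1" "finite W" unfolding U1_def W_def by auto
    ultimately have "card {..<n} = card Lp + card U1 + card W"
      using finLp by (metis card_Un_disjoint finite_UnI)
    then show ?thesis by simp
  qed
  define g where "g M = Min {x. x \<in># M \<and> \<not> loop x}" for M
  have gE1: "g {#a,u#} = u" if "loop a" "\<not> loop u" for a u
  proof -
    have "{x. x \<in># {#a,u#} \<and> \<not> loop x} = {u}" using that by auto
    then show ?thesis unfolding g_def by simp
  qed
  have U1eq: "U1 = g ` E1"
  proof
    show "U1 \<subseteq> g ` E1"
    proof
      fix u assume "u \<in> U1"
      then obtain a where a: "loop a" "adj a u" "\<not> loop u" unfolding U1_def by blast
      then have "{#a,u#} \<in> E1" unfolding E1_def by blast
      then show "u \<in> g ` E1" using gE1[OF a(1) a(3)] by force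
    qed
    show "g ` E1 \<subseteq> U1"
    proof
      fix x assume "x \<in> g ` E1"
      then obtain a u where "adj a u" "loop a" "\<not> loop u" "x = g {#a,u#}" unfolding E1_def by blast
      then show "x \<in> U1" unfolding U1_def using gE1 adj_lt by auto
    qed
  qed
  have cU1: "card U1 \<le> card E1" unfolding U1eq by (rule card_image_le[OF finE1])
  define Nb where "Nb w = {v. adj w v}" for w
  have finNb: "finite (Nb w)" for w
    unfolding Nb_def using adj_lt by (metis finite_lessThan lessThan_iff mem_Collect_eq rev_finite_subset subsetI)
  have deg2: "2 \<le> card (Nb w)" if w: "w \<in> W" for w
  proof -
    obtain i where i: "{#w,i#} \<in> MS" using s1 w unfolding W_def by blast
    have wi: "w \<noteq> i" using i w unfolding W_def loop_def by auto
    then have awi: "adj w i" unfolding adj_def using i by simp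
    have nli: "\<not> loop i" using w adj_sym[OF awi] unfolding W_def by blast
    obtain c where c: "add_mset c {#w,i#} \<in> MS" using s2[OF i] by auto
    have cw: "c \<noteq> w"
    proof
      assume "c = w"
      then have "{#w,w#} \<subseteq># add_mset c {#w,i#}" by simp
      then show False using C2[OF c] w unfolding W_def loop_def by blast
    qed
    have ci: "c \<noteq> i"
    proof
      assume "c = i"
      then have "{#i,i#} \<subseteq># add_mset c {#w,i#}" by simp
      then show False using C2[OF c] nli unfolding loop_def by blast
    qed
    have "{#w,c#} \<subseteq># add_mset c {#w,i#}" by (simp add: add_mset_commute)
    then have "adj w c" using C2[OF c] cw unfolding adj_def by simp
    then have "{i, c} \<subseteq> Nb w" using awi unfolding Nb_def by simp
    then have "card {i,c} \<le> card (Nb w)" using finNb by (rule card_mono[rotated])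
    then show ?thesis using ci by simp
  qed
  define P where "P = Sigma W Nb"
  define h where "h p = ({#fst p, snd p#}, fst p < snd p)" for p :: "nat \<times> nat"
  have finW: "finite W" unfolding W_def by auto
  have finP: "finite P" unfolding P_def using finW finNb by simp
  have injh: "inj_on h P"
  proof (rule inj_onI)
    fix p q assume pq: "p \<in> P" "q \<in> P" "h p = h q"
    obtain w v w' v' where pw: "p = (w, v)" "q = (w', v')" by (cases p, cases q) auto
    have wv: "w \<noteq> v" using pq(1) pw unfolding P_def Nb_def adj_def by auto
    have e: "{#w,v#} = {#w',v'#}" "(w < v) = (w' < v')" using pq(3) pw unfolding h_def by auto
    then have "(w = w' \<and> v = v') \<or> (w = v' \<and> v = w')" by (simp add: pair_eq)
    then show "p = q" using e(2) wv pw by auto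
  qed
  have hP: "h ` P \<subseteq> EF \<times> UNIV"
  proof
    fix x assume "x \<in> h ` P"
    then obtain w v where wv: "w \<in> W" "adj w v" "x = h (w, v)" unfolding P_def Nb_def by auto
    have "\<not> loop v" using wv adj_sym[OF wv(2)] unfolding W_def by blast
    then have "{#w,v#} \<in> EF" using wv unfolding EF_def W_def by blast
    then show "x \<in> EF \<times> UNIV" using wv unfolding h_def by simp
  qed
  have cardP1: "2 * card W \<le> card P"
  proof -
    have "card P = (\<Sum>w\<in>W. card (Nb w))" unfolding P_def using finW finNb by simp
    moreover have "(\<Sum>w\<in>W. 2) \<le> (\<Sum>w\<in>W. card (Nb w))" using deg2 by (intro sum_mono) auto
    ultimately show ?thesis by simp
  qed
  have cardP2: "card P \<le> 2 * card EF"
  proof -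
    have "card P = card (h ` P)" using injh by (simp add: card_image)
    also have "\<dots> \<le> card (EF \<times> (UNIV :: bool set))"
      using hP finEF by (intro card_mono) auto
    also have "\<dots> = 2 * card EF" by (simp add: card_cartesian_product)
    finally show ?thesis .
  qed
  have c2': "card D2 = n" using c2 unfolding D2_def .
  have nums0: "card EL + card E1 + card EF = card U1 + card W"
    using cardD2 cardV c2' by linarith
  have nums1: "card W \<le> card EF" using cardP1 cardP2 by linarith
  have nums: "card EL = 0" "card E1 = card U1" "card EF = card W" "card P = 2 * card W"
    using nums0 nums1 cU1 cardP1 cardP2 by linarith+
  have ELe: "EL = {}" using nums(1) finEL by simp
  have injg: "inj_on g E1"
    using nums(2) U1eq finE1 by (simp add: eq_card_imp_inj_on)
  have Nb2: "card (Nb w) = 2" if "w \<in> W" for w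
  proof (rule ccontr)
    assume "card (Nb w) \<noteq> 2"
    then have "2 < card (Nb w)" using deg2[OF that] by simp
    then have "(\<Sum>w\<in>W. 2) < (\<Sum>w\<in>W. card (Nb w))"
      using deg2 that finW by (intro sum_strict_mono_ex1) auto
    moreover have "card P = (\<Sum>w\<in>W. card (Nb w))" unfolding P_def using finW finNb by simp
    ultimately show False using nums(4) by simp
  qed
  have hPeq: "h ` P = EF \<times> UNIV"
  proof (rule card_subset_eq)
    show "finite (EF \<times> (UNIV :: bool set))" using finEF by simp
    show "h ` P \<subseteq> EF \<times> UNIV" by (rule hP)
    show "card (h ` P) = card (EF \<times> (UNIV :: bool set))"
      using injh nums by (simp add: card_image card_cartesian_product)
  qed
  have EFW: "x \<in> W" if "adj x y" "\<not> loop x" "\<not> loop y" for x y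
  proof -
    have "{#x,y#} \<in> EF" using that unfolding EF_def by blast
    then have "({#x,y#}, x < y) \<in> h ` P" using hPeq by simp
    then obtain w v where wv: "(w, v) \<in> P" "{#w,v#} = {#x,y#}" "(w < v) = (x < y)"
      unfolding h_def by auto
    have "x \<noteq> y" using that unfolding adj_def by simp
    then have "w = x" using wv(2,3) by (auto simp: pair_eq)
    then show ?thesis using wv(1) unfolding P_def by simp
  qed
  have tri_noloop: "\<not> loop a" if "adj a b" "adj b c" "adj a c" for a b c
  proof
    assume la: "loop a"
    have lb: "\<not> loop b"
    proof
      assume "loop b" then have "{#a,b#} \<in> EL" using la that unfolding EL_def by blast
      then show False using ELe by simp
    qed
    have lc: "\<not> loop c"
    proof
      assume "loop c" then have "{#a,c#} \<in> EL" using la that unfolding EL_def by blast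
      then show False using ELe by simp
    qed
    have "b \<in> W" using EFW[OF that(2) lb lc] .
    then show False using la that(1) unfolding W_def by blast
  qed
  have triW: "a \<in> W" if "adj a b" "adj b c" "adj a c" for a b c
  proof -
    have "\<not> loop a" using tri_noloop that by blast
    moreover have "\<not> loop b" using tri_noloop[of b c a] that adj_sym by blast
    ultimately show ?thesis using EFW that by blast
  qed
  have Nbeq: "Nb x = {y, z}" if "x \<in> W" "adj x y" "adj x z" "y \<noteq> z" for x y z
  proof -
    have "{y,z} \<subseteq> Nb x" using that unfolding Nb_def by simp
    moreover have "card {y,z} = card (Nb x)" using Nb2[OF that(1)] that(4) by simp
    ultimately show ?thesis using finNb by (metis card_subset_eq)
  qed
  define CubeA where "CubeA = {M\<in>D3. \<exists>k. M = {#k,k,k#}}"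
  define T2A where "T2A = {M\<in>D3. \<exists>a b. a \<noteq> b \<and> M = {#a,a,b#}}"
  define TriA where "TriA = {M\<in>D3. \<exists>a b c. adj a b \<and> adj b c \<and> adj a c \<and> M = {#a,b,c#}}"
  have CubeI: "M \<in> CubeA" if "M \<in> D3" "M = {#k,k,k#}" for M k
    using that unfolding CubeA_def by blast
  have T2I: "M \<in> T2A" if "M \<in> D3" "a \<noteq> b" "M = {#a,a,b#}" for M a b
    using that unfolding T2A_def by blast
  have TriI: "M \<in> TriA" if "M \<in> D3" "adj a b" "adj b c" "adj a c" "M = {#a,b,c#}" for M a b c
    using that unfolding TriA_def by blast
  have D3sub: "D3 \<subseteq> CubeA \<union> T2A \<union> TriA"
  proof
    fix M assume M: "M \<in> D3"
    then obtain a b c where abc: "M = {#a,b,c#}" using size3 unfolding D3_def by blast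
    have Mm: "M \<in> MS" using M unfolding D3_def by simp
    show "M \<in> CubeA \<union> T2A \<union> TriA"
    proof (cases "a = b")
      case True
      show ?thesis
      proof (cases "b = c")
        case True
        then have "M = {#c,c,c#}" using abc \<open>a = b\<close> by simp
        then have "M \<in> CubeA" using M by (rule CubeI[rotated])
        then show ?thesis by blast
      next
        case False
        then have "M = {#b,b,c#}" using abc \<open>a = b\<close> by simp
        then have "M \<in> T2A" using M False by (intro T2I)
        then show ?thesis by blast
      qed
    next
      case ab: False
      show ?thesis
      proof (cases "a = c")
        case True
        then have "M = {#a,a,b#}" using abc by (simp add: add_mset_commute)
        then have "M \<in> T2A" using M ab by (intro T2I)
        then show ?thesis by blast
      next
        case ac: False
        show ?thesis
        proof (cases "b = c")
          case True
          then have "M = {#b,b,a#}" using abc by (simp add: add_mset_commute)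
          then have "M \<in> T2A" using T2I[OF M, of b a] ab by auto
        then show ?thesis by blast
        next
          case bc: False
          have "{#a,b#} \<subseteq># M" "{#b,c#} \<subseteq># M" "{#a,c#} \<subseteq># M" using abc by simp_all
          then have "{#a,b#} \<in> MS" "{#b,c#} \<in> MS" "{#a,c#} \<in> MS" using C2[OF Mm] by blast+
          then have "adj a b" "adj b c" "adj a c" using ab ac bc unfolding adj_def by simp_all
          then have "M \<in> TriA" using M abc by (intro TriI)
          then show ?thesis by blast
        qed
      qed
    qed
  qed
  have finCA: "finite CubeA" "finite T2A" "finite TriA"
    unfolding CubeA_def T2A_def TriA_def using finD3 by simp_all
  have cCube: "card CubeA \<le> card Lp"
  proof -
    have "CubeA \<subseteq> (\<lambda>k. {#k,k,k#}) ` Lp"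
    proof
      fix M assume "M \<in> CubeA"
      then obtain k where k: "M \<in> MS" "M = {#k,k,k#}" unfolding CubeA_def D3_def by blast
      have "{#k,k#} \<subseteq># M" using k by simp
      then have "loop k" using C2[OF k(1)] unfolding loop_def by blast
      then show "M \<in> (\<lambda>k. {#k,k,k#}) ` Lp" using k unfolding Lp_def by blast
    qed
    then have "card CubeA \<le> card ((\<lambda>k. {#k,k,k#}) ` Lp)" using finLp by (intro card_mono) auto
    also have "\<dots> \<le> card Lp" using finLp by (rule card_image_le)
    finally show ?thesis .
  qed
  define psi where "psi M = add_mset (Min {x. x \<in># M \<and> loop x}) M" for M
  have cT2: "card T2A \<le> card E1"
  proof -
    have "T2A \<subseteq> psi ` E1"
    proof
      fix M assume "M \<in> T2A"
      then obtain a b where ab: "M \<in> MS" "a \<noteq> b" "M = {#a,a,b#}" unfolding T2A_def D3_def by blast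
      have "{#a,a#} \<subseteq># M" "{#a,b#} \<subseteq># M" using ab by simp_all
      then have la: "loop a" and aab: "adj a b" using C2[OF ab(1)] ab(2) unfolding loop_def adj_def by auto
      have lb: "\<not> loop b"
      proof
        assume "loop b" then have "{#a,b#} \<in> EL" using la aab unfolding EL_def by blast
        then show False using ELe by simp
      qed
      have e1: "{#a,b#} \<in> E1" using la lb aab unfolding E1_def by blast
      have "{x. x \<in># {#a,b#} \<and> loop x} = {a}" using la lb by auto
      then have "psi {#a,b#} = M" unfolding psi_def using ab by simp
      then show "M \<in> psi ` E1" using e1 by force
    qed
    then have "card T2A \<le> card (psi ` E1)" using finE1 by (intro card_mono) auto
    also have "\<dots> \<le> card E1" using finE1 by (rule card_image_le)
    finally show ?thesis .
  qed
  have cTri: "card W \<le> card TriA"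
  proof -
    have "n \<le> card (CubeA \<union> T2A \<union> TriA)"
      using c3 D3sub finCA unfolding D3_def[symmetric] by (metis card_mono finite_UnI)
    also have "\<dots> \<le> card CubeA + card T2A + card TriA"
      by (metis card_Un_le add_le_mono1 order_trans)
    finally show ?thesis using cCube cT2 nums cardV by linarith
  qed
  have Wempty: "W = {}"
  proof (rule ccontr)
    assume "W \<noteq> {}"
    have "TriA \<noteq> {}"
    proof
      assume "TriA = {}"
      then have "card W = 0" using cTri by simp
      then show False using finW \<open>W \<noteq> {}\<close> by simp
    qed
    then obtain M0 where M0: "M0 \<in> TriA" by blast
    have triset: "set_mset M = insert x (Nb x)" if hM: "M \<in> TriA" and hx: "x \<in># M" for M x
    proof -
      obtain a b c where abc: "adj a b" "adj b c" "adj a c" "M = {#a,b,c#}"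
        using hM unfolding TriA_def by blast
      have W3: "a \<in> W" "b \<in> W" "c \<in> W"
        using triW[OF abc(1-3)] triW[of b c a] triW[of c a b] abc(1-3) adj_sym by blast+
      have d: "a \<noteq> b" "b \<noteq> c" "a \<noteq> c" using abc unfolding adj_def by auto
      have "x = a \<or> x = b \<or> x = c" using hx abc(4) by auto
      then show ?thesis
      proof (elim disjE)
        assume "x = a" then show ?thesis using Nbeq[OF W3(1) abc(1) abc(3) d(2)] abc(4) by auto
      next
        assume "x = b" then show ?thesis using Nbeq[OF W3(2) adj_sym[OF abc(1)] abc(2) d(3)] abc(4) by auto
      next
        assume "x = c" then show ?thesis
          using Nbeq[OF W3(3) adj_sym[OF abc(3)] adj_sym[OF abc(2)] d(1)] abc(4) by auto
      qed
    qed
    have tridist: "M = mset_set (set_mset M)" if hM: "M \<in> TriA" for M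
    proof -
      obtain a b c where abc: "adj a b" "adj b c" "adj a c" "M = {#a,b,c#}"
        using hM unfolding TriA_def by blast
      then show ?thesis unfolding adj_def by auto
    qed
    have triW': "x \<in> W" if hM: "M \<in> TriA" and hx: "x \<in># M" for M x
    proof -
      obtain a b c where abc: "adj a b" "adj b c" "adj a c" "M = {#a,b,c#}"
        using hM unfolding TriA_def by blast
      then show ?thesis
        using hx triW[OF abc(1-3)] triW[of b c a] triW[of c a b] adj_sym by auto
    qed
    define m where "m M = Min (set_mset M)" for M :: "nat multiset"
    have mM: "m M \<in># M" if "M \<in> TriA" for M
    proof -
      have "M \<noteq> {#}" using that unfolding TriA_def by auto
      then show ?thesis unfolding m_def by (simp add: Min_in)
    qed
    have injm: "inj_on m TriA"
    proof (rule inj_onI)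
      fix M M' assume MM: "M \<in> TriA" "M' \<in> TriA" "m M = m M'"
      have "set_mset M = set_mset M'"
        using triset[OF MM(1) mM[OF MM(1)]] triset[OF MM(2) mM[OF MM(2)]] MM(3) by simp
      then show "M = M'" using tridist MM by metis
    qed
    have mW: "m ` TriA \<subseteq> W" using triW' mM by blast
    obtain a b c where abc: "adj a b" "adj b c" "adj a c" "M0 = {#a,b,c#}"
      using M0 unfolding TriA_def by blast
    have yex: "\<exists>y. y \<in># M0 \<and> y \<noteq> m M0"
    proof (cases "m M0 = a")
      case True
      then show ?thesis using abc unfolding adj_def by (intro exI[of _ b]) auto
    next
      case False
      then show ?thesis using abc by (intro exI[of _ a]) auto
    qed
    then obtain y where y: "y \<in># M0" "y \<noteq> m M0" by blast
    have yW: "y \<in> W" using triW' M0 y by blast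
    have ynot: "y \<notin> m ` TriA"
    proof
      assume "y \<in> m ` TriA"
      then obtain M' where M': "M' \<in> TriA" "y = m M'" by blast
      have "set_mset M' = set_mset M0"
        using triset[OF M'(1) mM[OF M'(1)]] triset[OF M0 y(1)] M'(2) by simp
      then have "m M' = m M0" unfolding m_def by simp
      then show False using M' y by simp
    qed
    have "m ` TriA \<subset> W" using mW yW ynot by blast
    then have "card (m ` TriA) < card W" using psubset_card_mono[OF finW] by blast
    then have "card TriA < card W" using injm by (simp add: card_image)
    then show False using cTri by simp
  qed
  have EFe: "EF = {}"
  proof -
    have "card EF = 0" using nums(3) Wempty by simp
    then show ?thesis using finEF by simp
  qed
  define f where "f j = (if loop j then j else SOME a. loop a \<and> adj a j)" for j
  have fprop: "loop (f j) \<and> (\<not> loop j \<longrightarrow> adj (f j) j)" if "j < n" for j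
  proof (cases "loop j")
    case True then show ?thesis unfolding f_def by simp
  next
    case False
    then have "j \<notin> W" using Wempty by simp
    then have "\<exists>a. loop a \<and> adj a j" using that False unfolding W_def by blast
    then have "loop (SOME a. loop a \<and> adj a j) \<and> adj (SOME a. loop a \<and> adj a j) j" by (rule someI_ex)
    then show ?thesis unfolding f_def using False by simp
  qed
  have fidem: "\<forall>j<n. f j < n \<and> f (f j) = f j"
  proof (intro allI impI)
    fix j assume "j < n"
    then have "loop (f j)" using fprop by blast
    then show "f j < n \<and> f (f j) = f j" using loop_lt unfolding f_def by auto
  qed
  have D2sub: "D2 \<subseteq> (\<lambda>j. {#j, f j#}) ` {..<n}"
  proof -
    have "LD \<subseteq> (\<lambda>j. {#j, f j#}) ` {..<n}"
      unfolding LD_def Lp_def f_def using loop_lt by auto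
    moreover have "E1 \<subseteq> (\<lambda>j. {#j, f j#}) ` {..<n}"
    proof
      fix M assume "M \<in> E1"
      then obtain a u where au: "adj a u" "loop a" "\<not> loop u" "M = {#a,u#}" unfolding E1_def by blast
      have un: "u < n" using adj_lt au by blast
      have fu: "loop (f u)" "adj (f u) u" using fprop[OF un] au by auto
      have e1: "{#f u, u#} \<in> E1" using fu au unfolding E1_def by blast
      have "g {#f u, u#} = g {#a,u#}" using gE1 fu au by simp
      then have "{#f u, u#} = {#a,u#}" using injg e1 au \<open>M \<in> E1\<close> by (metis inj_onD)
      then have "M = {#u, f u#}" using au by (simp add: add_mset_commute)
      then show "M \<in> (\<lambda>j. {#j, f j#}) ` {..<n}" using un by blast
    qed
    ultimately show ?thesis using D2eq ELe EFe by blast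
  qed
  have "D2 = (\<lambda>j. {#j, f j#}) ` {..<n}"
  proof (rule card_seteq)
    show "finite ((\<lambda>j. {#j, f j#}) ` {..<n})" by simp
    show "D2 \<subseteq> (\<lambda>j. {#j, f j#}) ` {..<n}" by (rule D2sub)
    show "card ((\<lambda>j. {#j, f j#}) ` {..<n}) \<le> card D2"
      using c2 card_image_le[of "{..<n}" "\<lambda>j. {#j, f j#}"] unfolding D2_def by simp
  qed
  then show ?thesis using fidem unfolding D2_def by blast
qed



lemma in_Nn_count: "in_Nn n (count M) \<longleftrightarrow> set_mset M \<subseteq> {..<n}"
  unfolding in_Nn_def by (auto simp: count_eq_zero_iff) (meson leI lessThan_iff subsetD)

lemma in_Nn_multiset: "in_Nn n x \<Longrightarrow> x = count (Abs_multiset x)"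
proof -
  assume "in_Nn n x"
  then have "{i. 0 < x i} \<subseteq> {..<n}" unfolding in_Nn_def by (auto simp: not_less[symmetric])
  then have "finite {i. 0 < x i}" by (rule finite_subset) simp
  then show ?thesis by (simp add: count_Abs_multiset)
qed

lemma deg_count: "set_mset M \<subseteq> {..<n} \<Longrightarrow> deg n (count M) = size M"
proof -
  assume h: "set_mset M \<subseteq> {..<n}"
  have "deg n (count M) = sum (count M) {..<n}" unfolding deg_def by simp
  also have "\<dots> = sum (count M) (set_mset M)"
    using h by (intro sum.mono_neutral_right) (auto simp: count_eq_zero_iff)
  also have "\<dots> = size M" by (simp add: size_multiset_overloaded_eq)
  finally show ?thesis .
qed

lemma count_le: "count M \<le> count N \<longleftrightarrow> M \<subseteq># N"
  by (simp add: le_fun_def subseteq_mset_def)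

lemma inj_count: "inj count"
  by (rule injI) (simp add: multiset_eq_iff)


definition MSf :: "nat \<Rightarrow> nat \<Rightarrow> (nat \<Rightarrow> nat) \<Rightarrow> nat multiset set" where
  "MSf n s f = insert {#} ((\<lambda>(j,e). Q f j e) ` ({..<n} \<times> {..<s}))"

lemma idem_props: "f \<in> Idem n \<Longrightarrow> j < n \<Longrightarrow> f j < n \<and> f (f j) = f j"
  unfolding Idem_def by auto

lemma Q_inj:
  assumes idem: "\<And>j. j < n \<Longrightarrow> f (f j) = f j" and jk: "j < n" "k < n"
    and eq: "Q f j e = Q f k e"
  shows "j = k"
proof (rule ccontr)
  assume ne: "j \<noteq> k"
  have "j \<in># Q f j e" by (simp add: Q_def)
  then have "j \<in># Q f k e" using eq by simp
  then have "j = f k" using set_Q[of f k e] ne by auto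
  have "k \<in># Q f k e" by (simp add: Q_def)
  then have "k \<in># Q f j e" using eq by simp
  then have "k = f j" using set_Q[of f j e] ne by auto
  then show False using \<open>j = f k\<close> idem[OF jk(1)] ne by simp
qed

lemma Q_2_inj: "Q f j 2 = Q g k 2 \<Longrightarrow> j = k \<and> f j = g k"
proof -
  assume eq: "Q f j 2 = Q g k 2"
  have c: "count (Q f j 2) x = count (Q g k 2) x" for x using eq by simp
  have "f j = g k"
  proof (rule ccontr)
    assume ne: "f j \<noteq> g k"
    have "count (Q f j 2) (f j) \<ge> 2" by (simp add: count_Q)
    moreover have "count (Q g k 2) (f j) \<le> 1" using ne by (simp add: count_Q)
    ultimately show False using c[of "f j"] by simp
  qed
  moreover have "j = k"
    using eq calculation by (simp add: Q_def)
  ultimately show ?thesis by simp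
qed

lemma MSf_sets: "f \<in> Idem n \<Longrightarrow> M \<in> MSf n s f \<Longrightarrow> set_mset M \<subseteq> {..<n}"
  unfolding MSf_def using set_Q idem_props by fastforce

lemma subset_add_mset_notin: "N \<subseteq># add_mset j R \<Longrightarrow> j \<notin># N \<Longrightarrow> N \<subseteq># R"
  unfolding subseteq_mset_def
  by (metis count_add_mset count_eq_zero_iff le_zero_eq less_Suc_eq_le less_or_eq_imp_le nat_less_le)

lemma MSf_down:
  assumes f: "f \<in> Idem n" and M: "M \<in> MSf n s f" and N: "N \<subseteq># M"
  shows "N \<in> MSf n s f"
proof (cases "M = {#}")
  case True
  then show ?thesis using N unfolding MSf_def by simp
next
  case False
  then obtain j e where je: "j < n" "e < s" "M = Q f j e" using M unfolding MSf_def by auto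
  have fj: "f j < n" "f (f j) = f j" using idem_props[OF f je(1)] by auto
  show ?thesis
  proof (cases "j \<in># N")
    case True
    have "N - {#j#} \<subseteq># replicate_mset e (f j)"
      using N True je(3) unfolding Q_def
      by (metis insert_DiffM mset_subset_eq_add_mset_cancel)
    then obtain e' where e': "e' \<le> e" "N - {#j#} = replicate_mset e' (f j)"
      by (metis msubseteq_replicate_msetE)
    then have "N = Q f j e'" unfolding Q_def using True by (metis insert_DiffM)
    then show ?thesis unfolding MSf_def using je e' by force
  next
    case False
    have "N \<subseteq># add_mset j (replicate_mset e (f j))" using N je(3) unfolding Q_def by simp
    then have "N \<subseteq># replicate_mset e (f j)" using False by (rule subset_add_mset_notin)
    then obtain e' where e': "e' \<le> e" "N = replicate_mset e' (f j)"
      by (metis msubseteq_replicate_msetE)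
    show ?thesis
    proof (cases e')
      case 0 then show ?thesis using e' unfolding MSf_def by simp
    next
      case (Suc e'')
      then have "N = Q f (f j) e''" using e' fj by (simp add: Q_def)
      moreover have "e'' < s" using e' je Suc by simp
      ultimately show ?thesis unfolding MSf_def using fj
        by (intro insertI2 image_eqI[of _ _ "(f j, e'')"]) auto
    qed
  qed
qed

lemma MSf_level0: "{M \<in> MSf n s f. size M = 0} = {{#}}"
  unfolding MSf_def by auto

lemma MSf_level: "{M \<in> MSf n s f. size M = Suc e} = (if e < s then (\<lambda>j. Q f j e) ` {..<n} else {})"
  unfolding MSf_def by auto

lemma card_MSf_level:
  assumes f: "f \<in> Idem n" and e: "e < s"
  shows "card {M \<in> MSf n s f. size M = Suc e} = n"
proof -
  have "inj_on (\<lambda>j. Q f j e) {..<n}"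
  proof (rule inj_onI)
    fix x y assume xy: "x \<in> {..<n}" "y \<in> {..<n}" "Q f x e = Q f y e"
    show "x = y" by (rule Q_inj[of n f]) (use idem_props[OF f] xy in auto)
  qed
  then show ?thesis unfolding MSf_level using e by (simp add: card_image)
qed

lemma MSf_soc:
  assumes f: "f \<in> Idem n" and n: "n \<ge> 1" and s: "s \<ge> 3"
    and M: "M \<in> MSf n s f" and sz: "size M < 3"
  shows "\<exists>N\<in>MSf n s f. M \<subseteq># N \<and> M \<noteq> N"
proof (cases "M = {#}")
  case True
  have "Q f 0 0 \<in> MSf n s f" unfolding MSf_def using n s by force
  moreover have "Q f 0 0 \<noteq> {#}" by (simp add: Q_def)
  ultimately show ?thesis using True by (intro bexI[of _ "Q f 0 0"]) auto
next
  case False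
  then obtain j e where je: "j < n" "e < s" "M = Q f j e" using M unfolding MSf_def by auto
  have "e < 2" using sz je by simp
  then have "Suc e < s" using s by simp
  then have "Q f j (Suc e) \<in> MSf n s f" unfolding MSf_def using je by force
  moreover have "M \<subseteq># Q f j (Suc e)" unfolding je Q_def
    by (simp add: subset_mset.add_mono)
  moreover have "M \<noteq> Q f j (Suc e)" using je by (metis size_Q n_not_Suc_n)
  ultimately show ?thesis by blast
qed


lemma hilb_count:
  assumes "\<And>M. M \<in> MS \<Longrightarrow> set_mset M \<subseteq> {..<n}"
  shows "hilb n (count ` MS) d = card {M\<in>MS. size M = d}"
proof -
  have "{x \<in> count ` MS. deg n x = d} = count ` {M\<in>MS. size M = d}"
    using assms deg_count by auto
  then show ?thesis unfolding hilb_def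
    by (simp add: card_image inj_on_subset[OF inj_count])
qed

lemma deg_image:
  assumes "\<And>M. M \<in> MS \<Longrightarrow> set_mset M \<subseteq> {..<n}"
  shows "deg n ` count ` MS = size ` MS"
  using assms deg_count by (force simp: image_image)

definition Lf :: "nat \<Rightarrow> nat \<Rightarrow> (nat \<Rightarrow> nat) \<Rightarrow> (nat \<Rightarrow> nat) set" where
  "Lf n s f = count ` MSf n s f"

lemma finite_MSf: "finite (MSf n s f)"
  unfolding MSf_def by simp

lemma sound:
  assumes f: "f \<in> Idem n" and n: "n \<ge> 1" and s: "s \<ge> 3"
  shows "is_partition n (Lf n s f) \<and> hilb_tuple n (Lf n s f) = 1 # replicate s n
         \<and> Soc (Lf n s f) \<subseteq> geq_part n (Lf n s f) 3"
proof -
  let ?M = "MSf n s f"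
  have sets: "\<And>M. M \<in> ?M \<Longrightarrow> set_mset M \<subseteq> {..<n}" using MSf_sets[OF f] by blast
  have part: "is_partition n (Lf n s f)"
    unfolding is_partition_def
  proof (intro conjI ballI allI impI)
    show "finite (Lf n s f)" unfolding Lf_def using finite_MSf by simp
  next
    fix x assume "x \<in> Lf n s f"
    then show "in_Nn n x" unfolding Lf_def using sets in_Nn_count by auto
  next
    fix x y assume x: "x \<in> Lf n s f" and y: "in_Nn n y \<and> y \<le> x"
    obtain M where M: "M \<in> ?M" "x = count M" using x unfolding Lf_def by auto
    have yc: "y = count (Abs_multiset y)" using y in_Nn_multiset by blast
    then have "Abs_multiset y \<subseteq># M" using y M count_le by metis
    then have "Abs_multiset y \<in> ?M" using MSf_down[OF f M(1)] by blast
    then show "y \<in> Lf n s f" unfolding Lf_def using yc by blast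
  qed
  have ne: "Lf n s f \<noteq> {}" unfolding Lf_def MSf_def by simp
  have sizes: "size ` ?M = {0..s}"
  proof
    show "size ` ?M \<subseteq> {0..s}" unfolding MSf_def by auto
    show "{0..s} \<subseteq> size ` ?M"
    proof
      fix d assume d: "d \<in> {0..s}"
      show "d \<in> size ` ?M"
      proof (cases d)
        case 0 then show ?thesis unfolding MSf_def by (intro image_eqI[of _ _ "{#}"]) auto
      next
        case (Suc e)
        then have "Q f 0 e \<in> ?M" unfolding MSf_def using d n by force
        then show ?thesis using Suc by (intro image_eqI[of _ _ "Q f 0 e"]) auto
      qed
    qed
  qed
  have dl: "deg n ` Lf n s f = {0..s}"
    using deg_image[of ?M n] sets sizes unfolding Lf_def by simp
  have mx: "Max (deg n ` Lf n s f) = s"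
    unfolding dl by (rule Max_eqI) auto
  have tup: "hilb_tuple n (Lf n s f) = 1 # replicate s n"
  proof -
    have "hilb_tuple n (Lf n s f) = map (hilb n (Lf n s f)) [0..<Suc s]"
      unfolding hilb_tuple_def using ne mx by simp
    also have "\<dots> = 1 # replicate s n"
    proof (rule nth_equalityI)
      show "length (map (hilb n (Lf n s f)) [0..<Suc s]) = length (1 # replicate s n)" by simp
      fix i assume "i < length (map (hilb n (Lf n s f)) [0..<Suc s])"
      then have i: "i < Suc s" by simp
      have "hilb n (Lf n s f) i = card {M\<in>?M. size M = i}"
        unfolding Lf_def by (rule hilb_count[OF sets])
      also have "\<dots> = (1 # replicate s n) ! i"
      proof (cases i)
        case 0 then show ?thesis using MSf_level0 by simp
      next
        case (Suc e) then show ?thesis using card_MSf_level[OF f, of e s] i by simp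
      qed
      finally show "map (hilb n (Lf n s f)) [0..<Suc s] ! i = (1 # replicate s n) ! i"
        using i by (simp del: upt_Suc)
    qed
    finally show ?thesis .
  qed
  have soc: "Soc (Lf n s f) \<subseteq> geq_part n (Lf n s f) 3"
  proof
    fix x assume x: "x \<in> Soc (Lf n s f)"
    then have xL: "x \<in> Lf n s f" and mx: "\<forall>y\<in>Lf n s f. x \<le> y \<longrightarrow> y = x"
      unfolding Soc_def by auto
    obtain M where M: "M \<in> ?M" "x = count M" using xL unfolding Lf_def by auto
    have "\<not> size M < 3"
    proof
      assume "size M < 3"
      then obtain N where N: "N \<in> ?M" "M \<subseteq># N" "M \<noteq> N" using MSf_soc[OF f n s M(1)] by blast
      then have "count M \<le> count N" using count_le by blast
      moreover have "count N \<in> Lf n s f" unfolding Lf_def using N by blast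
      ultimately have "count N = count M" using mx M by blast
      then show False using N(3) inj_count by (metis injD)
    qed
    then have "deg n x \<ge> 3" using M deg_count[OF sets[OF M(1)]] by simp
    then show "x \<in> geq_part n (Lf n s f) 3" unfolding geq_part_def using xL by simp
  qed
  show ?thesis using part tup soc by blast
qed


lemma psubset_add: "M \<subseteq># N \<Longrightarrow> M \<noteq> N \<Longrightarrow> \<exists>i. add_mset i M \<subseteq># N"
proof -
  assume h: "M \<subseteq># N" "M \<noteq> N"
  then have "N - M \<noteq> {#}" by (metis subset_mset.add_diff_inverse add.right_neutral)
  then obtain i where i: "i \<in># N - M" by blast
  have "add_mset i M = M + {#i#}" by simp
  also have "\<dots> \<subseteq># M + (N - M)" using i by (simp add: subset_mset.add_left_mono)
  also have "\<dots> = N" using h(1) by (simp add: subset_mset.add_diff_inverse)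
  finally show ?thesis by blast
qed

lemma complete:
  assumes n: "n \<ge> 1" and s: "s \<ge> 3"
    and part: "is_partition n L" and tup: "hilb_tuple n L = 1 # replicate s n"
    and soc: "Soc L \<subseteq> geq_part n L 3"
  shows "\<exists>f\<in>Idem n. L = Lf n s f"
proof -
  define MS where "MS = {M. count M \<in> L}"
  have finL: "finite L" and nnL: "\<And>x. x \<in> L \<Longrightarrow> in_Nn n x"
    and dwL: "\<And>x y. x \<in> L \<Longrightarrow> in_Nn n y \<Longrightarrow> y \<le> x \<Longrightarrow> y \<in> L"
    using part unfolding is_partition_def by blast+
  have Lc: "L = count ` MS"
  proof
    show "L \<subseteq> count ` MS"
    proof
      fix x assume x: "x \<in> L"
      then have "x = count (Abs_multiset x)" using nnL in_Nn_multiset by blast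
      then show "x \<in> count ` MS" unfolding MS_def using x by (metis (mono_tags, lifting) image_eqI mem_Collect_eq)
    qed
    show "count ` MS \<subseteq> L" unfolding MS_def by auto
  qed
  have finMS: "finite MS" unfolding MS_def using finite_vimageI[OF finL inj_count] by (simp add: vimage_def)
  have C1: "\<And>M. M \<in> MS \<Longrightarrow> set_mset M \<subseteq> {..<n}"
    unfolding MS_def using nnL in_Nn_count by blast
  have C2: "\<And>M N. M \<in> MS \<Longrightarrow> N \<subseteq># M \<Longrightarrow> N \<in> MS"
  proof -
    fix M N assume M: "M \<in> MS" and N: "N \<subseteq># M"
    have "set_mset N \<subseteq> {..<n}" using C1[OF M] set_mset_mono[OF N] by blast
    then have "in_Nn n (count N)" using in_Nn_count by blast
    moreover have "count N \<le> count M" using N count_le by blast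
    ultimately show "N \<in> MS" using dwL M unfolding MS_def by blast
  qed
  have Lne: "L \<noteq> {}" using tup unfolding hilb_tuple_def by auto
  have len: "length (hilb_tuple n L) = Suc s" using tup by simp
  then have mx: "Max (deg n ` L) = s" using Lne unfolding hilb_tuple_def by simp
  have hl: "hilb n L d = (1 # replicate s n) ! d" if "d \<le> s" for d
  proof -
    have "hilb_tuple n L ! d = hilb n L d"
      unfolding hilb_tuple_def using Lne mx that by (simp del: upt_Suc)
    then show ?thesis using tup by simp
  qed
  have lev: "card {M\<in>MS. size M = Suc e} = n" if "e < s" for e
  proof -
    have "card {M\<in>MS. size M = Suc e} = hilb n L (Suc e)"
      unfolding Lc by (rule hilb_count[symmetric]) (rule C1)
    also have "\<dots> = n" using hl[of "Suc e"] that by simp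
    finally show ?thesis .
  qed
  have szb: "size M \<le> s" if "M \<in> MS" for M
  proof -
    have "deg n (count M) \<le> Max (deg n ` L)"
      using that finL unfolding MS_def by (intro Max_ge) auto
    then show ?thesis using mx deg_count[OF C1[OF that]] by simp
  qed
  have socM: "\<exists>i. add_mset i M \<in> MS" if M: "M \<in> MS" and sz: "size M < 3" for M
  proof -
    have xL: "count M \<in> L" using M unfolding MS_def by simp
    have "count M \<notin> geq_part n L 3"
      using sz deg_count[OF C1[OF M]] unfolding geq_part_def by simp
    then have "count M \<notin> Soc L" using soc by blast
    then obtain y where y: "y \<in> L" "count M \<le> y" "y \<noteq> count M"
      using xL unfolding Soc_def by blast
    obtain N where N: "N \<in> MS" "y = count N" using y(1) Lc by blast
    have "M \<subseteq># N" "M \<noteq> N" using y N count_le by auto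
    then obtain i where "add_mset i M \<subseteq># N" using psubset_add by blast
    then show ?thesis using C2[OF N(1)] by blast
  qed
  have D1: "{M\<in>MS. size M = 1} = (\<lambda>j. {#j#}) ` {..<n}"
  proof (rule card_subset_eq)
    show "finite ((\<lambda>j. {#j#}) ` {..<n})" by simp
    show "{M \<in> MS. size M = 1} \<subseteq> (\<lambda>j. {#j#}) ` {..<n}"
    proof
      fix M assume M: "M \<in> {M \<in> MS. size M = 1}"
      then obtain a where a: "M = {#a#}" using size_1_singleton_mset by blast
      have "M \<in> MS" using M by simp
      then have "set_mset M \<subseteq> {..<n}" by (rule C1)
      then have "a < n" using a by simp
      then show "M \<in> (\<lambda>j. {#j#}) ` {..<n}" using a by blast
    qed
    show "card {M \<in> MS. size M = 1} = card ((\<lambda>j. {#j#}) ` {..<n})"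
      using lev[of 0] s by (simp add: card_image inj_on_def)
  qed
  have s1: "\<exists>i. {#j,i#} \<in> MS" if "j < n" for j
  proof -
    have "{#j#} \<in> MS" using D1 that by blast
    then obtain i where "add_mset i {#j#} \<in> MS" using socM by fastforce
    then show ?thesis by (metis add_mset_commute)
  qed
  have s2: "\<exists>i. add_mset i M \<in> MS" if "M \<in> MS" "size M = 2" for M
    using socM that by simp
  have c2: "card {M\<in>MS. size M = 2} = n" using lev[of 1] s by (simp add: numeral_2_eq_2)
  have c3: "card {M\<in>MS. size M = 3} = n" using lev[of 2] s by (simp add: numeral_3_eq_3)
  have "\<exists>f. (\<forall>j<n. f j < n \<and> f (f j) = f j) \<and> {M\<in>MS. size M = 2} = (\<lambda>j. {#j, f j#}) ` {..<n}"
    by (rule graph_lemma[OF finMS C1 C2 c2 c3 s1 s2])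
  then obtain f0 where f0: "\<forall>j<n. f0 j < n \<and> f0 (f0 j) = f0 j"
    "{M\<in>MS. size M = 2} = (\<lambda>j. {#j, f0 j#}) ` {..<n}" by blast
  define f where "f = restrict f0 {..<n}"
  have fI: "f \<in> Idem n" unfolding f_def Idem_def using f0(1) by auto
  have fid: "\<And>j. j < n \<Longrightarrow> f j < n \<and> f (f j) = f j" using idem_props[OF fI] by blast
  have levels: "{M\<in>MS. size M = Suc e} = (\<lambda>j. Q f j e) ` {..<n}" if "e < s" for e
    using that
  proof (induction e)
    case 0
    have "(\<lambda>j. Q f j 0) ` {..<n} = (\<lambda>j. {#j#}) ` {..<n}" by (simp add: Q_def)
    then show ?case using D1 by simp
  next
    case (Suc e)
    show ?case
    proof (cases "e = 0")
      case True
      have "(\<lambda>j. Q f j 1) ` {..<n} = (\<lambda>j. {#j, f0 j#}) ` {..<n}"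
        unfolding Q_def f_def by (intro image_cong) auto
      then show ?thesis using f0(2) True by (simp add: numeral_2_eq_2)
    next
      case False
      have IH: "{M\<in>MS. size M = Suc e} = (\<lambda>j. Q f j e) ` {..<n}" using Suc by simp
      show ?thesis
      proof (rule card_seteq)
        show "finite ((\<lambda>j. Q f j (Suc e)) ` {..<n})" by simp
        show "{M \<in> MS. size M = Suc (Suc e)} \<subseteq> (\<lambda>j. Q f j (Suc e)) ` {..<n}"
        proof
          fix M assume M: "M \<in> {M \<in> MS. size M = Suc (Suc e)}"
          have "\<exists>k<n. M = Q f k (Suc e)"
          proof (rule step[OF fid])
            show "1 \<le> e" using False by simp
            show "M \<noteq> {#}" using M by auto
            fix i assume i: "i \<in># M"
            have "M - {#i#} \<in> MS" using C2[of M "M - {#i#}"] M by simp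
            moreover have "size (M - {#i#}) = Suc e" using M i by (simp add: size_Diff_singleton)
            ultimately have "M - {#i#} \<in> (\<lambda>j. Q f j e) ` {..<n}" using IH by blast
            then show "\<exists>j<n. M - {#i#} = Q f j e" by blast
          qed
          then show "M \<in> (\<lambda>j. Q f j (Suc e)) ` {..<n}" by blast
        qed
        show "card ((\<lambda>j. Q f j (Suc e)) ` {..<n}) \<le> card {M \<in> MS. size M = Suc (Suc e)}"
          using lev[of "Suc e"] Suc.prems card_image_le[of "{..<n}" "\<lambda>j. Q f j (Suc e)"] by simp
      qed
    qed
  qed
  have "MS = MSf n s f"
  proof
    show "MS \<subseteq> MSf n s f"
    proof
      fix M assume M: "M \<in> MS"
      show "M \<in> MSf n s f"
      proof (cases "size M")
        case 0 then show ?thesis unfolding MSf_def by simp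
      next
        case (Suc e)
        then have "e < s" using szb[OF M] by simp
        then have "M \<in> {M\<in>MS. size M = Suc e}" using M Suc by simp
        then have "M \<in> (\<lambda>j. Q f j e) ` {..<n}" using levels[OF \<open>e < s\<close>] by simp
        then obtain j where "j < n" "M = Q f j e" by auto
        then show ?thesis unfolding MSf_def using \<open>e < s\<close>
          by (intro insertI2 image_eqI[of _ _ "(j, e)"]) auto
      qed
    qed
    show "MSf n s f \<subseteq> MS"
    proof
      fix M assume M: "M \<in> MSf n s f"
      show "M \<in> MS"
      proof (cases "M = {#}")
        case True
        obtain x where "x \<in> L" using Lne by blast
        then obtain N where "N \<in> MS" using Lc by blast
        then show ?thesis using C2[of N "{#}"] True by simp
      next
        case False
        then obtain j e where je: "j < n" "e < s" "M = Q f j e" using M unfolding MSf_def by auto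
        then have "M \<in> (\<lambda>j. Q f j e) ` {..<n}" by simp
        then have "M \<in> {M\<in>MS. size M = Suc e}" using levels[OF je(2)] by simp
        then show ?thesis by simp
      qed
    qed
  qed
  then have "L = Lf n s f" using Lc unfolding Lf_def by simp
  then show ?thesis using fI by blast
qed

lemma Lf_inj:
  assumes s: "s \<ge> 3"
  shows "inj_on (Lf n s) (Idem n)"
proof (rule inj_onI)
  fix f g assume f: "f \<in> Idem n" and g: "g \<in> Idem n" and eq: "Lf n s f = Lf n s g"
  have "count ` MSf n s f = count ` MSf n s g" using eq unfolding Lf_def .
  then have eqM: "MSf n s f = MSf n s g" by (simp only: inj_image_eq_iff[OF inj_count])
  show "f = g"
  proof (rule PiE_ext)
    show "f \<in> {..<n} \<rightarrow>\<^sub>E {..<n}" "g \<in> {..<n} \<rightarrow>\<^sub>E {..<n}" using f g unfolding Idem_def by auto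
    fix j assume j: "j \<in> {..<n}"
    have "Q f j 2 \<in> MSf n s f" unfolding MSf_def using j s by force
    then have "Q f j 2 \<in> MSf n s g" using eqM by simp
    moreover have "Q f j 2 \<noteq> {#}" by (simp add: Q_def)
    ultimately obtain k e where ke: "Q f j 2 = Q g k e" unfolding MSf_def by auto
    then have "e = 2" by (metis size_Q Suc_inject)
    then show "f j = g j" using Q_2_inj ke by blast
  qed
qed


lemma fps_part:
  fixes a :: "nat \<Rightarrow> nat"
  assumes "\<And>n. a n = (\<Sum>k\<le>n. (n choose k) * k ^ (n - k))"
  shows "Bor (Abs_fps (\<lambda>n. real (a n))) = fps_compose (fps_exp 1) (fps_X * fps_exp 1)"
proof (rule fps_ext)
  fix n
  have pw: "(fps_X * fps_exp (1::real)) ^ i = fps_X ^ i * fps_exp (of_nat i)" for i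
    by (simp add: power_mult_distrib fps_exp_power_mult)
  have "fps_nth (fps_compose (fps_exp 1) (fps_X * fps_exp (1::real))) n
      = (\<Sum>i=0..n. 1 / fact i * (real i ^ (n - i) / fact (n - i)))"
    unfolding fps_compose_nth pw fps_X_power_mult_nth
    by (intro sum.cong) auto
  also have "\<dots> = (\<Sum>i\<le>n. real (n choose i) * real i ^ (n - i)) / fact n"
    unfolding sum_divide_distrib atLeast0AtMost
    by (intro sum.cong refl) (simp add: binomial_fact field_simps)
  also have "\<dots> = real (a n) / fact n"
    by (simp add: assms)
  finally show "fps_nth (Bor (Abs_fps (\<lambda>n. real (a n)))) n = fps_nth (fps_compose (fps_exp 1) (fps_X * fps_exp 1)) n"
    by (simp add: Bor_def)
qed

theorem theorem5p4:
  fixes s :: nat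
  assumes "s \<ge> 3"
  shows "(\<forall>n\<ge>1. alpha (hns n s) = (\<Sum>k\<le>n. (n choose k) * k ^ (n - k)))
       \<and> Bor (Abs_fps (\<lambda>n. if n = 0 then 1 else real (alpha (hns n s))))
           = fps_compose (fps_exp 1) (fps_X * fps_exp 1)"
proof -
  have A: "alpha (hns n s) = (\<Sum>k\<le>n. (n choose k) * k ^ (n - k))" if n: "n \<ge> 1" for n
  proof -
    have h1: "hns n s ! 1 = n" using assms unfolding hns_def by simp
    have "{L. is_partition (hns n s ! 1) L \<and> hilb_tuple (hns n s ! 1) L = hns n s \<and>
                       Soc L \<subseteq> geq_part (hns n s ! 1) L 3} = Lf n s ` Idem n"
    proof
      show "{L. is_partition (hns n s ! 1) L \<and> hilb_tuple (hns n s ! 1) L = hns n s \<and>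
                       Soc L \<subseteq> geq_part (hns n s ! 1) L 3} \<subseteq> Lf n s ` Idem n"
      proof
        fix L assume "L \<in> {L. is_partition (hns n s ! 1) L \<and> hilb_tuple (hns n s ! 1) L = hns n s \<and>
                       Soc L \<subseteq> geq_part (hns n s ! 1) L 3}"
        then have "is_partition n L" "hilb_tuple n L = 1 # replicate s n" "Soc L \<subseteq> geq_part n L 3"
          unfolding h1 by (auto simp: hns_def)
        then obtain f where "f \<in> Idem n" "L = Lf n s f" using complete[OF n assms] by blast
        then show "L \<in> Lf n s ` Idem n" by blast
      qed
      show "Lf n s ` Idem n \<subseteq> {L. is_partition (hns n s ! 1) L \<and> hilb_tuple (hns n s ! 1) L = hns n s \<and>
                       Soc L \<subseteq> geq_part (hns n s ! 1) L 3}"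
        using sound[OF _ n assms] unfolding h1 by (auto simp: hns_def)
    qed
    then have "alpha (hns n s) = card (Lf n s ` Idem n)" unfolding alpha_def by simp
    also have "\<dots> = card (Idem n)" using Lf_inj[OF assms] by (rule card_image)
    also have "\<dots> = (\<Sum>k\<le>n. (n choose k) * k ^ (n - k))" by (rule card_Idem)
    finally show ?thesis .
  qed
  have "(\<lambda>n. if n = 0 then 1 else real (alpha (hns n s)))
      = (\<lambda>n. real (\<Sum>k\<le>n. (n choose k) * k ^ (n - k)))"
  proof
    fix n show "(if n = 0 then 1 else real (alpha (hns n s))) = real (\<Sum>k\<le>n. (n choose k) * k ^ (n - k))"
      using A[of n] by (cases n) auto
  qed
  moreover have "Bor (Abs_fps (\<lambda>n. real (\<Sum>k\<le>n. (n choose k) * k ^ (n - k))))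
      = fps_compose (fps_exp 1) (fps_X * fps_exp 1)"
    by (rule fps_part) simp
  ultimately show ?thesis using A by simp
qed

end
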